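(* Let $k>2$ and $n\ge 1$, $\ell\ge 0$ be integers. Let ${\sf S}^{(r)}_k(n,\ell)$ denote the number of restricted $k$-noncrossing RNA structures on $\{1,\dots,n\}$ with exactly $\ell$ isolated vertices, ${\sf S}^{(r)}_k(n)=\sum_\ell{\sf S}^{(r)}_k(n,\ell)$, and $f_k(m,\ell)$ the number of $k$-noncrossing digraphs on $\{1,\dots,m\}$ with exactly $\ell$ isolated vertices ($f_k(m,\ell)=0$ if $\ell>m$). For integers $m\ge 0$ and $b_1,b_2\ge 0$ let $\lambda(m,b_1,b_2)$ be the number of sets consisting of exactly $b_1$ arcs of the form $(i,i+1)$ and exactly $b_2$ arcs of the form $(i,i+2)$ on $\{1,\dots,m\}$, pairwise vertex-disjoint; set $\lambda(m,b_1,b_2)=0$ if $b_1<0$ or $b_2<0$. Then $$ {\sf S}^{(r)}_k(n,\ell)=\sum_{\substack{b_1,b_2\ge 0\\ 2(b_1+b_2)\le n}}(-1)^{b_1+b_2}\lambda(n,b_1,b_2)\,f_k(n-2(b_1+b_2),\ell), $$ $$ {\sf S}^{(r)}_k(n)=\sum_{\substack{b_1,b_2\ge 0\\ 2(b_1+b_2)\le n}}(-1)^{b_1+b_2}\lambda(n,b_1,b_2)\left\{\sum_{\ell=0}^{n-2(b_1+b_2)}f_k(n-2(b_1+b_2),\ell)\right\}. $$ Moreover, for all $n\ge 4$ and $b_1,b_2\ge 0$, $$ \lambda(n,b_1,b_2)=\lambda(n-2,b_1-1,b_2)+\lambda(n-1,b_1,b_2)+\lambda(n-4,b_1,b_2-2)+\lambda(n-3,b_1,b_2-1),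 $$ and $\lambda(n,0,0)=1$, $\lambda(n,b_1,0)=\binom{n-b_1}{b_1}$, $\lambda(1,0,1)=0$, $\lambda(n,0,1)=n-2$ for $n\ge 2$, and $\lambda(n,0,2)=0$ for $n=2,3$.
   Context: A digraph on $\{1,\dots,n\}$ is a set of arcs $(i,j)$ with $1\le i<j\le n$. It is $k$-noncrossing if every vertex lies in at most one arc and there are no $k$ arcs $(i_1,j_1),\dots,(i_k,j_k)$ with $i_1<\dots<i_k<j_1<\dots<j_k$. A vertex is isolated if it lies in no arc. A $1$-arc is an arc $(i,i+1)$ and a $2$-arc is an arc $(i,i+2)$. A $k$-noncrossing RNA structure is a $k$-noncrossing digraph with no $1$-arc; it is restricted if it also has no $2$-arc. *)

theory Defs
  imports Main
begin

definition digraph_on :: "nat \<Rightarrow> (nat \<times> nat) set \<Rightarrow> bool" where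
  "digraph_on n A \<longleftrightarrow> A \<subseteq> {(i, j). 1 \<le> i \<and> i < j \<and> j \<le> n}"

definition vertex_disjoint :: "(nat \<times> nat) set \<Rightarrow> bool" where
  "vertex_disjoint A \<longleftrightarrow>
     (\<forall>a\<in>A. \<forall>b\<in>A. a \<noteq> b \<longrightarrow> {fst a, snd a} \<inter> {fst b, snd b} = {})"

definition has_k_crossing :: "nat \<Rightarrow> (nat \<times> nat) set \<Rightarrow> bool" where
  "has_k_crossing k A \<longleftrightarrow>
     (\<exists>ii jj :: nat \<Rightarrow> nat.
        (\<forall>t<k. (ii t, jj t) \<in> A) \<and>
        (\<forall>t. Suc t < k \<longrightarrow> ii t < ii (Suc t) \<and> jj t < jj (Suc t)) \<and>
        ii (k - 1) < jj 0)"

definition k_noncrossing :: "nat \<Rightarrow> nat \<Rightarrow> (nat \<times> nat) set \<Rightarrow> bool" where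
  "k_noncrossing k n A \<longleftrightarrow> digraph_on n A \<and> vertex_disjoint A \<and> \<not> has_k_crossing k A"

definition isolated :: "nat \<Rightarrow> (nat \<times> nat) set \<Rightarrow> nat set" where
  "isolated n A = {v \<in> {1..n}. \<forall>(i, j)\<in>A. v \<noteq> i \<and> v \<noteq> j}"

definition restricted_rna :: "nat \<Rightarrow> nat \<Rightarrow> (nat \<times> nat) set \<Rightarrow> bool" where
  "restricted_rna k n A \<longleftrightarrow> k_noncrossing k n A \<and>
     (\<forall>(i, j)\<in>A. j \<noteq> i + 1 \<and> j \<noteq> i + 2)"

definition S_r :: "nat \<Rightarrow> nat \<Rightarrow> nat \<Rightarrow> nat" where
  "S_r k n l = card {A. restricted_rna k n A \<and> card (isolated n A) = l}"

text \<open>S^(r)_k(n) = sum over l of S^(r)_k(n,l), i.e. the number of all restricted structures.\<close>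
definition S_r_total :: "nat \<Rightarrow> nat \<Rightarrow> nat" where
  "S_r_total k n = card {A. restricted_rna k n A}"

definition f_nc :: "nat \<Rightarrow> nat \<Rightarrow> nat \<Rightarrow> nat" where
  "f_nc k m l = card {A. k_noncrossing k m A \<and> card (isolated m A) = l}"

definition lam :: "nat \<Rightarrow> int \<Rightarrow> int \<Rightarrow> nat" where
  "lam m b1 b2 = (if b1 < 0 \<or> b2 < 0 then 0 else
     card {A. digraph_on m A \<and> vertex_disjoint A \<and>
               (\<forall>(i, j)\<in>A. j = i + 1 \<or> j = i + 2) \<and>
               int (card {(i, j)\<in>A. j = i + 1}) = b1 \<and>
               int (card {(i, j)\<in>A. j = i + 2}) = b2})"

end

theory Submission
  imports Defs
begin

definition shortm :: "nat \<Rightarrow> (nat \<times> nat) set \<Rightarrow> bool" where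
  "shortm m A \<longleftrightarrow> digraph_on m A \<and> vertex_disjoint A \<and> (\<forall>(i, j)\<in>A. j = i + 1 \<or> j = i + 2)"
definition c1 :: "(nat \<times> nat) set \<Rightarrow> nat" where "c1 A = card {(i, j)\<in>A. j = i + 1}"
definition c2 :: "(nat \<times> nat) set \<Rightarrow> nat" where "c2 A = card {(i, j)\<in>A. j = i + 2}"
definition lamN :: "nat \<Rightarrow> nat \<Rightarrow> nat \<Rightarrow> nat" where
  "lamN m p q = card {A. shortm m A \<and> c1 A = p \<and> c2 A = q}"
definition cov :: "(nat \<times> nat) set \<Rightarrow> nat \<Rightarrow> bool" where
  "cov A v \<longleftrightarrow> (\<exists>a\<in>A. v = fst a \<or> v = snd a)"

lemma lam_nat: "lam m (int p) (int q) = lamN m p q"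
  by (simp add: lam_def lamN_def shortm_def c1_def c2_def)

lemma lam_neg: "b1 < 0 \<or> b2 < 0 \<Longrightarrow> lam m b1 b2 = 0"
  by (simp add: lam_def)

lemma digraph_sub: "digraph_on m A \<Longrightarrow> A \<subseteq> {1..m} \<times> {1..m}"
  unfolding digraph_on_def by auto

lemma digraph_finite: "digraph_on m A \<Longrightarrow> finite A"
  using digraph_sub finite_subset by blast

lemma finite_digraphs: "finite {A. digraph_on m A}"
proof -
  have "{A. digraph_on m A} \<subseteq> Pow ({1..m} \<times> {1..m})" using digraph_sub by blast
  then show ?thesis by (rule finite_subset) simp
qed

lemma finite_digraphs': "finite {A. digraph_on m A \<and> P A}"
  by (rule finite_subset[OF _ finite_digraphs]) auto

lemma finite_filt[simp]: "finite A \<Longrightarrow> finite {(i, j)\<in>A. P i j}"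
  by (rule finite_subset[of _ A]) auto

lemma c_union:
  assumes "finite A" "finite X" "A \<inter> X = {}"
  shows "c1 (A \<union> X) = c1 A + c1 X" "c2 (A \<union> X) = c2 A + c2 X"
proof -
  have e1: "{(i, j)\<in>A \<union> X. j = i + 1} = {(i, j)\<in>A. j = i + 1} \<union> {(i, j)\<in>X. j = i + 1}" by auto
  show "c1 (A \<union> X) = c1 A + c1 X" unfolding c1_def e1
    by (rule card_Un_disjoint) (use assms in auto)
  have e2: "{(i, j)\<in>A \<union> X. j = i + 2} = {(i, j)\<in>A. j = i + 2} \<union> {(i, j)\<in>X. j = i + 2}" by auto
  show "c2 (A \<union> X) = c2 A + c2 X" unfolding c2_def e2
    by (rule card_Un_disjoint) (use assms in auto)
qed

lemma card_c: assumes "shortm m A" shows "card A = c1 A + c2 A"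
proof -
  have f: "finite A" using assms digraph_finite shortm_def by blast
  have "A = {(i, j)\<in>A. j = i + 1} \<union> {(i, j)\<in>A. j = i + 2}" using assms unfolding shortm_def by auto
  then have "card A = card ({(i, j)\<in>A. j = i + 1} \<union> {(i, j)\<in>A. j = i + 2})" by simp
  also have "\<dots> = c1 A + c2 A" unfolding c1_def c2_def
    by (rule card_Un_disjoint) (use f in auto)
  finally show ?thesis .
qed

definition verts :: "(nat \<times> nat) set \<Rightarrow> nat set" where
  "verts A = (\<Union>a\<in>A. {fst a, snd a})"

lemma card_verts:
  assumes "finite A" "vertex_disjoint A" "\<forall>a\<in>A. fst a < snd a"
  shows "card (verts A) = 2 * card A"
proof -
  have "card (verts A) = (\<Sum>a\<in>A. card {fst a, snd a})"
    unfolding verts_def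
    by (rule card_UN_disjoint) (use assms in \<open>auto simp: vertex_disjoint_def\<close>)
  also have "\<dots> = (\<Sum>a\<in>A. 2)" by (rule sum.cong) (use assms in auto)
  finally show ?thesis by simp
qed

lemma verts_sub: "digraph_on m A \<Longrightarrow> verts A \<subseteq> {1..m}"
  unfolding digraph_on_def verts_def by auto

lemma shortm_card_le: assumes "shortm m A" shows "2 * card A \<le> m"
proof -
  have "card (verts A) = 2 * card A"
    by (rule card_verts) (use assms digraph_finite in \<open>auto simp: shortm_def digraph_on_def\<close>)
  moreover have "card (verts A) \<le> m"
    using card_mono[OF _ verts_sub] assms unfolding shortm_def by fastforce
  ultimately show ?thesis by simp
qed

lemma shortm_arc: "shortm m A \<Longrightarrow> a \<in> A \<Longrightarrow> 1 \<le> fst a \<and> fst a < snd a \<and> snd a \<le> m"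
  unfolding shortm_def digraph_on_def by auto

lemma vd_cov: "vertex_disjoint A \<Longrightarrow> a \<in> A \<Longrightarrow> b \<in> A \<Longrightarrow> (v = fst a \<or> v = snd a) \<Longrightarrow> (v = fst b \<or> v = snd b) \<Longrightarrow> a = b"
  unfolding vertex_disjoint_def by blast

lemma strip:
  assumes r: "r \<le> m" and X: "shortm m X" and Xhi: "\<forall>a\<in>X. m - r < fst a"
  defines "T \<equiv> {A. shortm m A \<and> X \<subseteq> A \<and> (\<forall>v. m - r < v \<longrightarrow> v \<le> m \<longrightarrow> \<not> cov X v \<longrightarrow> \<not> cov A v)}"
  shows "card {A\<in>T. c1 A = p \<and> c2 A = q} = card {A'. shortm (m-r) A' \<and> c1 A' + c1 X = p \<and> c2 A' + c2 X = q}"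
proof -
  let ?L = "{A\<in>T. c1 A = p \<and> c2 A = q}"
  let ?R = "{A'. shortm (m-r) A' \<and> c1 A' + c1 X = p \<and> c2 A' + c2 X = q}"
  have fX: "finite X" using X digraph_finite shortm_def by blast
  have disj: "A' \<inter> X = {}" if sA: "shortm (m-r) A'" for A'
  proof -
    { fix a assume a: "a \<in> A'" "a \<in> X"
      have "snd a \<le> m-r" "fst a < snd a" using shortm_arc[OF sA a(1)] by auto
      moreover have "m-r < fst a" using Xhi a(2) by blast
      ultimately have False by simp }
    then show ?thesis by blast
  qed
  have up: "A' \<union> X \<in> ?L" if A': "A' \<in> ?R" for A'
  proof -
    have sA: "shortm (m-r) A'" using A' by simp
    have fA: "finite A'" using sA digraph_finite shortm_def by blast
    have sm: "shortm m (A' \<union> X)"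
      unfolding shortm_def
    proof (intro conjI)
      show "digraph_on m (A' \<union> X)" using sA X unfolding shortm_def digraph_on_def by auto
      show "\<forall>(i, j)\<in>A' \<union> X. j = i + 1 \<or> j = i + 2" using sA X unfolding shortm_def by auto
      show "vertex_disjoint (A' \<union> X)" unfolding vertex_disjoint_def
      proof (intro ballI impI)
        fix a b assume ab: "a \<in> A' \<union> X" "b \<in> A' \<union> X" "a \<noteq> b"
        show "{fst a, snd a} \<inter> {fst b, snd b} = {}"
        proof (cases "a \<in> X")
          case True
          then show ?thesis
          proof (cases "b \<in> X")
            case True
            then show ?thesis using \<open>a \<in> X\<close> ab X unfolding shortm_def vertex_disjoint_def by blast
          next
            case False
            then have "b \<in> A'" using ab by blast
            then show ?thesis using shortm_arc[OF sA \<open>b \<in> A'\<close>] shortm_arc[OF X True] Xhi True by auto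
          qed
        next
          case False
          then have "a \<in> A'" using ab by blast
          then show ?thesis
          proof (cases "b \<in> X")
            case True
            then show ?thesis using shortm_arc[OF sA \<open>a \<in> A'\<close>] shortm_arc[OF X True] Xhi True by auto
          next
            case False
            then have "b \<in> A'" using ab by blast
            then show ?thesis using \<open>a \<in> A'\<close> ab sA unfolding shortm_def vertex_disjoint_def by blast
          qed
        qed
      qed
    qed
    have nc: "\<not> cov (A' \<union> X) v" if v: "m - r < v" "\<not> cov X v" for v
    proof
      assume "cov (A' \<union> X) v"
      then obtain a where a: "a \<in> A' \<union> X" "v = fst a \<or> v = snd a" unfolding cov_def by blast
      show False
      proof (cases "a \<in> X")
        case True then show False using a v unfolding cov_def by blast
      next
        case False
        then have "a \<in> A'" using a by blast
        then have "fst a < snd a" "snd a \<le> m - r" using shortm_arc[OF sA] by auto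
        then show False using a(2) v(1) by auto
      qed
    qed
    show ?thesis using sm nc A' c_union[OF fA fX disj[OF sA]] unfolding T_def by auto
  qed
  have down: "A - X \<in> ?R \<and> A = (A - X) \<union> X" if A: "A \<in> ?L" for A
  proof -
    have sA: "shortm m A" and XA: "X \<subseteq> A" and nc: "\<And>v. m - r < v \<Longrightarrow> v \<le> m \<Longrightarrow> \<not> cov X v \<Longrightarrow> \<not> cov A v"
      using A unfolding T_def by auto
    have fA: "finite A" using sA digraph_finite shortm_def by blast
    have low: "snd a \<le> m - r" if a: "a \<in> A - X" for a
    proof (rule ccontr)
      assume "\<not> snd a \<le> m - r"
      moreover have "snd a \<le> m" using shortm_arc[OF sA] a by blast
      moreover have "cov A (snd a)" using a unfolding cov_def by blast
      ultimately have "cov X (snd a)" using nc[of "snd a"] not_le by metis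
      then obtain b where b: "b \<in> X" "snd a = fst b \<or> snd a = snd b" unfolding cov_def by blast
      have "a = b" by (rule vd_cov[of A a b "snd a"]) (use sA a b XA in \<open>auto simp: shortm_def\<close>)
      then show False using a b by blast
    qed
    have sAX: "shortm (m - r) (A - X)"
      using sA low unfolding shortm_def digraph_on_def vertex_disjoint_def by auto
    have eq: "A = (A - X) \<union> X" using XA by blast
    have "c1 A = c1 (A - X) + c1 X" "c2 A = c2 (A - X) + c2 X"
      using c_union[of "A - X" X] fA fX eq by auto
    then show ?thesis using sAX eq A by auto
  qed
  have "bij_betw (\<lambda>A'. A' \<union> X) ?R ?L"
  proof (rule bij_betwI')
    fix x y assume "x \<in> ?R" "y \<in> ?R"
    then have "x = (x \<union> X) - X" "y = (y \<union> X) - X" using disj by auto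
    then show "(x \<union> X = y \<union> X) = (x = y)" by metis
  next
    show "\<And>x. x \<in> ?R \<Longrightarrow> x \<union> X \<in> ?L" using up by blast
  next
    show "\<And>y. y \<in> ?L \<Longrightarrow> \<exists>x\<in>?R. y = x \<union> X" using down by blast
  qed
  then show ?thesis by (simp add: bij_betw_same_card)
qed

lemma count_shift:
  "card {A'. shortm k A' \<and> c1 A' + x1 = p \<and> c2 A' + x2 = q} =
   (if x1 \<le> p \<and> x2 \<le> q then lamN k (p - x1) (q - x2) else 0)"
proof (cases "x1 \<le> p \<and> x2 \<le> q")
  case True
  then have "{A'. shortm k A' \<and> c1 A' + x1 = p \<and> c2 A' + x2 = q} = {A. shortm k A \<and> c1 A = p - x1 \<and> c2 A = q - x2}"
    by auto
  then show ?thesis using True by (simp add: lamN_def)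
next
  case False
  then have "{A'. shortm k A' \<and> c1 A' + x1 = p \<and> c2 A' + x2 = q} = {}" by auto
  moreover have "(if x1 \<le> p \<and> x2 \<le> q then lamN k (p - x1) (q - x2) else 0) = 0" by (rule if_not_P[OF False])
  ultimately show ?thesis by (metis card.empty)
qed

lemma card_split: "finite S \<Longrightarrow> card S = card {x\<in>S. P x} + card {x\<in>S. \<not> P x}"
proof -
  assume f: "finite S"
  have "S = {x\<in>S. P x} \<union> {x\<in>S. \<not> P x}" by blast
  then have "card S = card ({x\<in>S. P x} \<union> {x\<in>S. \<not> P x})" by simp
  also have "\<dots> = card {x\<in>S. P x} + card {x\<in>S. \<not> P x}"
    by (rule card_Un_disjoint) (use f in auto)
  finally show ?thesis .
qed

lemma finite_S: "finite {A. shortm m A \<and> P A}"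
  by (rule finite_subset[OF _ finite_digraphs[of m]]) (auto simp: shortm_def)

lemma shortm_empty[simp]: "shortm m {}"
  by (simp add: shortm_def digraph_on_def vertex_disjoint_def)

lemma c_empty[simp]: "c1 {} = 0" "c2 {} = 0" by (simp_all add: c1_def c2_def)

lemma case_unc: assumes "m \<ge> 1"
  shows "card {A. (shortm m A \<and> c1 A = p \<and> c2 A = q) \<and> \<not> cov A m} = lamN (m - 1) p q"
proof -
  have "card {A\<in>{A. shortm m A \<and> {} \<subseteq> A \<and> (\<forall>v. m - 1 < v \<longrightarrow> v \<le> m \<longrightarrow> \<not> cov {} v \<longrightarrow> \<not> cov A v)}. c1 A = p \<and> c2 A = q}
     = card {A'. shortm (m-1) A' \<and> c1 A' + c1 {} = p \<and> c2 A' + c2 {} = q}"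
    by (rule strip) (use assms in auto)
  also have "\<dots> = lamN (m-1) p q" using count_shift[of "m-1" 0 p 0 q] by simp
  finally have e: "card {A\<in>{A. shortm m A \<and> {} \<subseteq> A \<and> (\<forall>v. m - 1 < v \<longrightarrow> v \<le> m \<longrightarrow> \<not> cov {} v \<longrightarrow> \<not> cov A v)}. c1 A = p \<and> c2 A = q} = lamN (m-1) p q" .
  have "{A\<in>{A. shortm m A \<and> {} \<subseteq> A \<and> (\<forall>v. m - 1 < v \<longrightarrow> v \<le> m \<longrightarrow> \<not> cov {} v \<longrightarrow> \<not> cov A v)}. c1 A = p \<and> c2 A = q}
     = {A. (shortm m A \<and> c1 A = p \<and> c2 A = q) \<and> \<not> cov A m}"
  proof (intro Collect_cong iffI)
    fix A
    assume "(shortm m A \<and> c1 A = p \<and> c2 A = q) \<and> \<not> cov A m"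
    then show "A \<in> {A. shortm m A \<and> {} \<subseteq> A \<and> (\<forall>v. m - 1 < v \<longrightarrow> v \<le> m \<longrightarrow> \<not> cov {} v \<longrightarrow> \<not> cov A v)} \<and> c1 A = p \<and> c2 A = q"
      using assms by (auto simp: cov_def)
  next
    fix A
    assume a: "A \<in> {A. shortm m A \<and> {} \<subseteq> A \<and> (\<forall>v. m - 1 < v \<longrightarrow> v \<le> m \<longrightarrow> \<not> cov {} v \<longrightarrow> \<not> cov A v)} \<and> c1 A = p \<and> c2 A = q"
    have "m - 1 < m" using assms by simp
    then have "\<not> cov A m" using a by (auto simp: cov_def)
    then show "(shortm m A \<and> c1 A = p \<and> c2 A = q) \<and> \<not> cov A m" using a by auto
  qed
  then show ?thesis using e by simp
qed

lemma case_one: assumes "m \<ge> 2"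
  shows "card {A. (shortm m A \<and> c1 A = p \<and> c2 A = q) \<and> (m - 1, m) \<in> A} = (if p = 0 then 0 else lamN (m - 2) (p - 1) q)"
proof -
  let ?X = "{(m - 1, m)}"
  have sX: "shortm m ?X" using assms unfolding shortm_def digraph_on_def vertex_disjoint_def by auto
  have e1: "{(i, j). (i, j) \<in> ?X \<and> j = i + 1} = ?X" "{(i, j). (i, j) \<in> ?X \<and> j = i + 2} = {}" using assms by auto
  have cX: "c1 ?X = 1" "c2 ?X = 0" using assms unfolding c1_def c2_def e1 by auto
  have "card {A\<in>{A. shortm m A \<and> ?X \<subseteq> A \<and> (\<forall>v. m - 2 < v \<longrightarrow> v \<le> m \<longrightarrow> \<not> cov ?X v \<longrightarrow> \<not> cov A v)}. c1 A = p \<and> c2 A = q}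
     = card {A'. shortm (m-2) A' \<and> c1 A' + c1 ?X = p \<and> c2 A' + c2 ?X = q}"
    by (rule strip) (use assms sX in auto)
  also have "\<dots> = (if p = 0 then 0 else lamN (m - 2) (p - 1) q)" using count_shift[of "m-2" 1 p 0 q] cX by simp
  finally have e: "card {A\<in>{A. shortm m A \<and> ?X \<subseteq> A \<and> (\<forall>v. m - 2 < v \<longrightarrow> v \<le> m \<longrightarrow> \<not> cov ?X v \<longrightarrow> \<not> cov A v)}. c1 A = p \<and> c2 A = q} = (if p = 0 then 0 else lamN (m - 2) (p - 1) q)" .
  have "{A\<in>{A. shortm m A \<and> ?X \<subseteq> A \<and> (\<forall>v. m - 2 < v \<longrightarrow> v \<le> m \<longrightarrow> \<not> cov ?X v \<longrightarrow> \<not> cov A v)}. c1 A = p \<and> c2 A = q}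
     = {A. (shortm m A \<and> c1 A = p \<and> c2 A = q) \<and> (m - 1, m) \<in> A}"
  proof (intro Collect_cong iffI)
    fix A
    assume "(shortm m A \<and> c1 A = p \<and> c2 A = q) \<and> (m - 1, m) \<in> A"
    moreover have "\<And>v. m - 2 < v \<Longrightarrow> v \<le> m \<Longrightarrow> cov ?X v"
    proof -
      fix v assume "m - 2 < v" "v \<le> m"
      then have "v = m - 1 \<or> v = m" using assms by auto
      then show "cov ?X v" by (auto simp: cov_def)
    qed
    ultimately show "A \<in> {A. shortm m A \<and> ?X \<subseteq> A \<and> (\<forall>v. m - 2 < v \<longrightarrow> v \<le> m \<longrightarrow> \<not> cov ?X v \<longrightarrow> \<not> cov A v)} \<and> c1 A = p \<and> c2 A = q"
      by auto
  qed auto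
  then show ?thesis using e by simp
qed

lemma case_2a: assumes "m \<ge> 3"
  shows "card {A. (shortm m A \<and> c1 A = p \<and> c2 A = q) \<and> (m - 2, m) \<in> A \<and> \<not> cov A (m - 1)} = (if q = 0 then 0 else lamN (m - 3) p (q - 1))"
proof -
  let ?X = "{(m - 2, m)}"
  have "1 \<le> m - 2" "m - 2 < m" "m = m - 2 + 2" using assms by auto
  then have sX: "shortm m ?X" unfolding shortm_def digraph_on_def vertex_disjoint_def by auto
  have e1: "{(i, j). (i, j) \<in> ?X \<and> j = i + 1} = {}" "{(i, j). (i, j) \<in> ?X \<and> j = i + 2} = ?X" using assms by auto
  have cX: "c1 ?X = 0" "c2 ?X = 1" using assms unfolding c1_def c2_def e1 by auto
  have "card {A\<in>{A. shortm m A \<and> ?X \<subseteq> A \<and> (\<forall>v. m - 3 < v \<longrightarrow> v \<le> m \<longrightarrow> \<not> cov ?X v \<longrightarrow> \<not> cov A v)}. c1 A = p \<and> c2 A = q}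
     = card {A'. shortm (m-3) A' \<and> c1 A' + c1 ?X = p \<and> c2 A' + c2 ?X = q}"
    by (rule strip) (use assms sX in auto)
  also have "\<dots> = (if q = 0 then 0 else lamN (m - 3) p (q - 1))" using count_shift[of "m-3" 0 p 1 q] cX by simp
  finally have e: "card {A\<in>{A. shortm m A \<and> ?X \<subseteq> A \<and> (\<forall>v. m - 3 < v \<longrightarrow> v \<le> m \<longrightarrow> \<not> cov ?X v \<longrightarrow> \<not> cov A v)}. c1 A = p \<and> c2 A = q} = (if q = 0 then 0 else lamN (m - 3) p (q - 1))" .
  have covX: "cov ?X v \<longleftrightarrow> v = m - 2 \<or> v = m" for v unfolding cov_def by simp
  have "{A\<in>{A. shortm m A \<and> ?X \<subseteq> A \<and> (\<forall>v. m - 3 < v \<longrightarrow> v \<le> m \<longrightarrow> \<not> cov ?X v \<longrightarrow> \<not> cov A v)}. c1 A = p \<and> c2 A = q}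
     = {A. (shortm m A \<and> c1 A = p \<and> c2 A = q) \<and> (m - 2, m) \<in> A \<and> \<not> cov A (m - 1)}"
  proof (intro Collect_cong iffI)
    fix A
    assume a: "(shortm m A \<and> c1 A = p \<and> c2 A = q) \<and> (m - 2, m) \<in> A \<and> \<not> cov A (m - 1)"
    have nc: "\<forall>v. m - 3 < v \<longrightarrow> v \<le> m \<longrightarrow> \<not> cov ?X v \<longrightarrow> \<not> cov A v"
    proof (intro allI impI)
      fix v assume v: "m - 3 < v" "v \<le> m" "\<not> cov ?X v"
      then have "v \<noteq> m - 2" "v \<noteq> m" using covX by blast+
      then have "v = m - 1" using v(1,2) assms by linarith
      then show "\<not> cov A v" using a by simp
    qed
    have "?X \<subseteq> A" using a by simp
    then show "A \<in> {A. shortm m A \<and> ?X \<subseteq> A \<and> (\<forall>v. m - 3 < v \<longrightarrow> v \<le> m \<longrightarrow> \<not> cov ?X v \<longrightarrow> \<not> cov A v)} \<and> c1 A = p \<and> c2 A = q"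
      using a nc by blast
  next
    fix A
    assume a: "A \<in> {A. shortm m A \<and> ?X \<subseteq> A \<and> (\<forall>v. m - 3 < v \<longrightarrow> v \<le> m \<longrightarrow> \<not> cov ?X v \<longrightarrow> \<not> cov A v)} \<and> c1 A = p \<and> c2 A = q"
    have "\<not> cov ?X (m - 1)" using covX assms by auto
    moreover have "m - 3 < m - 1" "m - 1 \<le> m" using assms by auto
    moreover have "\<forall>v. m - 3 < v \<longrightarrow> v \<le> m \<longrightarrow> \<not> cov ?X v \<longrightarrow> \<not> cov A v" using a by blast
    ultimately have "\<not> cov A (m - 1)" by blast
    then show "(shortm m A \<and> c1 A = p \<and> c2 A = q) \<and> (m - 2, m) \<in> A \<and> \<not> cov A (m - 1)" using a by auto
  qed
  then show ?thesis using e by simp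
qed

lemma case_2b: assumes "m \<ge> 4"
  shows "card {A. (shortm m A \<and> c1 A = p \<and> c2 A = q) \<and> (m - 2, m) \<in> A \<and> (m - 3, m - 1) \<in> A} = (if q < 2 then 0 else lamN (m - 4) p (q - 2))"
proof -
  let ?X = "{(m - 3, m - 1), (m - 2, m)}"
  have h: "1 \<le> m - 3" "m - 3 < m - 1" "m - 1 = m - 3 + 2" "m - 1 \<le> m" "1 \<le> m - 2" "m - 2 < m" "m = m - 2 + 2"
     "m - 3 \<noteq> m - 2" "m - 3 \<noteq> m" "m - 1 \<noteq> m - 2" "m - 1 \<noteq> m" using assms by auto
  then have sX: "shortm m ?X" unfolding shortm_def digraph_on_def vertex_disjoint_def by auto
  have e1: "{(i, j). (i, j) \<in> ?X \<and> j = i + 1} = {}" "{(i, j). (i, j) \<in> ?X \<and> j = i + 2} = ?X" using assms by auto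
  have cX: "c1 ?X = 0" "c2 ?X = 2" using assms unfolding c1_def c2_def e1 by auto
  have "card {A\<in>{A. shortm m A \<and> ?X \<subseteq> A \<and> (\<forall>v. m - 4 < v \<longrightarrow> v \<le> m \<longrightarrow> \<not> cov ?X v \<longrightarrow> \<not> cov A v)}. c1 A = p \<and> c2 A = q}
     = card {A'. shortm (m-4) A' \<and> c1 A' + c1 ?X = p \<and> c2 A' + c2 ?X = q}"
    by (rule strip) (use assms sX in auto)
  also have "\<dots> = (if q < 2 then 0 else lamN (m - 4) p (q - 2))" using count_shift[of "m-4" 0 p 2 q] cX by simp
  finally have e: "card {A\<in>{A. shortm m A \<and> ?X \<subseteq> A \<and> (\<forall>v. m - 4 < v \<longrightarrow> v \<le> m \<longrightarrow> \<not> cov ?X v \<longrightarrow> \<not> cov A v)}. c1 A = p \<and> c2 A = q} = (if q < 2 then 0 else lamN (m - 4) p (q - 2))" .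
  have covX: "m - 4 < v \<Longrightarrow> v \<le> m \<Longrightarrow> cov ?X v" for v
  proof -
    assume "m - 4 < v" "v \<le> m"
    then have "v = m - 3 \<or> v = m - 2 \<or> v = m - 1 \<or> v = m" using assms by auto
    then show ?thesis by (auto simp: cov_def)
  qed
  have "{A\<in>{A. shortm m A \<and> ?X \<subseteq> A \<and> (\<forall>v. m - 4 < v \<longrightarrow> v \<le> m \<longrightarrow> \<not> cov ?X v \<longrightarrow> \<not> cov A v)}. c1 A = p \<and> c2 A = q}
     = {A. (shortm m A \<and> c1 A = p \<and> c2 A = q) \<and> (m - 2, m) \<in> A \<and> (m - 3, m - 1) \<in> A}"
  proof (intro Collect_cong iffI)
    fix A
    assume a: "(shortm m A \<and> c1 A = p \<and> c2 A = q) \<and> (m - 2, m) \<in> A \<and> (m - 3, m - 1) \<in> A"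
    then have "?X \<subseteq> A" by simp
    then show "A \<in> {A. shortm m A \<and> ?X \<subseteq> A \<and> (\<forall>v. m - 4 < v \<longrightarrow> v \<le> m \<longrightarrow> \<not> cov ?X v \<longrightarrow> \<not> cov A v)} \<and> c1 A = p \<and> c2 A = q"
      using a covX by blast
  next
    fix A
    assume a: "A \<in> {A. shortm m A \<and> ?X \<subseteq> A \<and> (\<forall>v. m - 4 < v \<longrightarrow> v \<le> m \<longrightarrow> \<not> cov ?X v \<longrightarrow> \<not> cov A v)} \<and> c1 A = p \<and> c2 A = q"
    then show "(shortm m A \<and> c1 A = p \<and> c2 A = q) \<and> (m - 2, m) \<in> A \<and> (m - 3, m - 1) \<in> A"
      by blast
  qed
  then show ?thesis using e by simp
qed



lemma key1: assumes "shortm m A" "cov A m" "(m - 1, m) \<notin> A"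
  shows "(m - 2, m) \<in> A \<and> m \<ge> 3"
proof -
  obtain a where a: "a \<in> A" "m = fst a \<or> m = snd a" using assms(2) unfolding cov_def by blast
  have h: "1 \<le> fst a" "fst a < snd a" "snd a \<le> m" using shortm_arc[OF assms(1) a(1)] by auto
  have s: "snd a = fst a + 1 \<or> snd a = fst a + 2" using assms(1) a(1) unfolding shortm_def by auto
  have sm: "snd a = m" using a(2) h by auto
  have ae: "a = (fst a, snd a)" by simp
  show ?thesis
  proof (cases "snd a = fst a + 1")
    case True
    then have "fst a = m - 1" using sm by simp
    then have "a = (m - 1, m)" using ae sm by simp
    then show ?thesis using a(1) assms(3) by simp
  next
    case False
    then have "snd a = fst a + 2" using s by simp
    then have "fst a = m - 2" "m \<ge> 3" using sm h by auto
    then have "a = (m - 2, m)" using ae sm by simp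
    then show ?thesis using a(1) \<open>m \<ge> 3\<close> by simp
  qed
qed

lemma key2: assumes "shortm m A" "(m - 2, m) \<in> A" "cov A (m - 1)" "m \<ge> 3"
  shows "(m - 3, m - 1) \<in> A"
proof -
  obtain a where a: "a \<in> A" "m - 1 = fst a \<or> m - 1 = snd a" using assms(3) unfolding cov_def by blast
  have h: "1 \<le> fst a" "fst a < snd a" "snd a \<le> m" using shortm_arc[OF assms(1) a(1)] by auto
  have s: "snd a = fst a + 1 \<or> snd a = fst a + 2" using assms(1) a(1) unfolding shortm_def by auto
  have ne: "a \<noteq> (m - 2, m)" using a(2) assms(4) by auto
  have d: "{fst a, snd a} \<inter> {m - 2, m} = {}" using assms(1) a(1) assms(2) ne
    unfolding shortm_def vertex_disjoint_def by (metis fst_conv snd_conv)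
  have "fst a \<noteq> m - 1"
  proof
    assume "fst a = m - 1"
    then have "snd a = m" using h assms(4) by linarith
    then show False using d by auto
  qed
  then have "snd a = m - 1" using a(2) by auto
  moreover have "fst a \<noteq> m - 2" using d by auto
  ultimately have "fst a = m - 3" using s assms(4) by linarith
  then have "a = (m - 3, m - 1)" using \<open>snd a = m - 1\<close> by (metis prod.collapse)
  then show ?thesis using a(1) by simp
qed

lemma conv1: assumes "shortm m A" "(m - 2, m) \<in> A" "m \<ge> 3" shows "cov A m" "(m - 1, m) \<notin> A"
proof -
  show "cov A m" using assms(2) unfolding cov_def by force
  show "(m - 1, m) \<notin> A"
  proof
    assume "(m - 1, m) \<in> A"
    moreover have "(m - 1, m) \<noteq> (m - 2, m)" using assms(3) by simp
    moreover have "vertex_disjoint A" using assms(1) unfolding shortm_def by blast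
    ultimately have "{m - 1, m} \<inter> {m - 2, m} = {}" using assms(2) unfolding vertex_disjoint_def
      by (metis fst_conv snd_conv)
    then show False by blast
  qed
qed

lemma rec_general: assumes "m \<ge> 2"
  shows "lamN m p q = lamN (m - 1) p q + (if p = 0 then 0 else lamN (m - 2) (p - 1) q)
     + card {A. (shortm m A \<and> c1 A = p \<and> c2 A = q) \<and> cov A m \<and> (m - 1, m) \<notin> A}"
proof -
  let ?S = "{A. shortm m A \<and> c1 A = p \<and> c2 A = q}"
  have fS: "finite ?S" using finite_S[of m] by simp
  have "lamN m p q = card {x\<in>?S. \<not> cov x m} + card {x\<in>?S. cov x m}"
    unfolding lamN_def using card_split[OF fS, of "\<lambda>x. \<not> cov x m"] by simp
  also have "card {x\<in>?S. \<not> cov x m} = lamN (m - 1) p q" using case_unc[of m p q] assms by simp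
  also have "card {x\<in>?S. cov x m} = card {x\<in>{x\<in>?S. cov x m}. (m - 1, m) \<in> x} + card {x\<in>{x\<in>?S. cov x m}. (m - 1, m) \<notin> x}"
    by (rule card_split) (rule finite_subset[OF _ fS], blast)
  also have "{x\<in>{x\<in>?S. cov x m}. (m - 1, m) \<in> x} = {A. (shortm m A \<and> c1 A = p \<and> c2 A = q) \<and> (m - 1, m) \<in> A}"
    unfolding cov_def by force
  also have "card \<dots> = (if p = 0 then 0 else lamN (m - 2) (p - 1) q)" using case_one[OF assms] by simp
  also have "{x\<in>{x\<in>?S. cov x m}. (m - 1, m) \<notin> x} = {A. (shortm m A \<and> c1 A = p \<and> c2 A = q) \<and> cov A m \<and> (m - 1, m) \<notin> A}"
    by auto
  finally show ?thesis by simp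
qed

lemma rest_2: assumes "m \<ge> 4"
  shows "card {A. (shortm m A \<and> c1 A = p \<and> c2 A = q) \<and> cov A m \<and> (m - 1, m) \<notin> A}
    = (if q < 2 then 0 else lamN (m - 4) p (q - 2)) + (if q = 0 then 0 else lamN (m - 3) p (q - 1))"
proof -
  let ?R = "{A. (shortm m A \<and> c1 A = p \<and> c2 A = q) \<and> cov A m \<and> (m - 1, m) \<notin> A}"
  have fR: "finite ?R" by (rule finite_subset[OF _ finite_S[of m "\<lambda>_. True"]]) auto
  have "card ?R = card {x\<in>?R. cov x (m - 1)} + card {x\<in>?R. \<not> cov x (m - 1)}"
    by (rule card_split[OF fR])
  also have "{x\<in>?R. cov x (m - 1)} = {A. (shortm m A \<and> c1 A = p \<and> c2 A = q) \<and> (m - 2, m) \<in> A \<and> (m - 3, m - 1) \<in> A}"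
  proof (intro Collect_cong iffI)
    fix A assume "A \<in> ?R \<and> cov A (m - 1)"
    then have a: "shortm m A" "c1 A = p" "c2 A = q" "cov A m" "(m - 1, m) \<notin> A" "cov A (m - 1)" by simp_all
    have "(m - 2, m) \<in> A" "m \<ge> 3" using key1[OF a(1,4,5)] by simp_all
    moreover have "(m - 3, m - 1) \<in> A" using key2[OF a(1) \<open>(m - 2, m) \<in> A\<close> a(6) \<open>m \<ge> 3\<close>] .
    ultimately show "(shortm m A \<and> c1 A = p \<and> c2 A = q) \<and> (m - 2, m) \<in> A \<and> (m - 3, m - 1) \<in> A"
      using a by simp
  next
    fix A assume a: "(shortm m A \<and> c1 A = p \<and> c2 A = q) \<and> (m - 2, m) \<in> A \<and> (m - 3, m - 1) \<in> A"
    then have "cov A (m - 1)" unfolding cov_def by (metis snd_conv)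
    moreover have "m \<ge> 3" using assms by simp
    ultimately show "A \<in> ?R \<and> cov A (m - 1)" using a conv1[of m A] by simp
  qed
  also have "card \<dots> = (if q < 2 then 0 else lamN (m - 4) p (q - 2))" by (rule case_2b[OF assms])
  also have "{x\<in>?R. \<not> cov x (m - 1)} = {A. (shortm m A \<and> c1 A = p \<and> c2 A = q) \<and> (m - 2, m) \<in> A \<and> \<not> cov A (m - 1)}"
  proof (intro Collect_cong iffI)
    fix A assume "A \<in> ?R \<and> \<not> cov A (m - 1)"
    then have a: "shortm m A" "c1 A = p" "c2 A = q" "cov A m" "(m - 1, m) \<notin> A" "\<not> cov A (m - 1)" by simp_all
    have "(m - 2, m) \<in> A" using key1[OF a(1,4,5)] by simp_all
    then show "(shortm m A \<and> c1 A = p \<and> c2 A = q) \<and> (m - 2, m) \<in> A \<and> \<not> cov A (m - 1)"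
      using a by simp
  next
    fix A assume a: "(shortm m A \<and> c1 A = p \<and> c2 A = q) \<and> (m - 2, m) \<in> A \<and> \<not> cov A (m - 1)"
    moreover have "m \<ge> 3" using assms by simp
    ultimately show "A \<in> ?R \<and> \<not> cov A (m - 1)" using conv1[of m A] by simp
  qed
  also have "card \<dots> = (if q = 0 then 0 else lamN (m - 3) p (q - 1))" by (rule case_2a) (use assms in auto)
  finally show ?thesis .
qed

lemma rest_q0: "card {A. (shortm m A \<and> c1 A = p \<and> c2 A = 0) \<and> cov A m \<and> (m - 1, m) \<notin> A} = 0"
proof -
  have e: "{A. (shortm m A \<and> c1 A = p \<and> c2 A = 0) \<and> cov A m \<and> (m - 1, m) \<notin> A} = {}"
  proof (rule ccontr)
    assume "\<not> ?thesis"
    then obtain A where "A \<in> {A. (shortm m A \<and> c1 A = p \<and> c2 A = 0) \<and> cov A m \<and> (m - 1, m) \<notin> A}" by (meson ex_in_conv)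
    then have A: "shortm m A" "c2 A = 0" "cov A m" "(m - 1, m) \<notin> A" by simp_all
    have k: "(m - 2, m) \<in> A" "m \<ge> 3" using key1[OF A(1,3,4)] by auto
    have fA: "finite A" using A(1) digraph_finite shortm_def by blast
    have "m = m - 2 + 2" using k(2) by simp
    then have "(m - 2, m) \<in> {(i, j)\<in>A. j = i + 2}" using k(1) by simp
    then have "{(i, j)\<in>A. j = i + 2} \<noteq> {}" by blast
    then have "c2 A > 0" unfolding c2_def using fA by (simp add: card_gt_0_iff)
    then show False using A(2) by simp
  qed
  show ?thesis unfolding e by simp
qed

lemma lamN_rec: assumes "m \<ge> 4"
  shows "lamN m p q = (if p = 0 then 0 else lamN (m - 2) (p - 1) q) + lamN (m - 1) p q
     + (if q < 2 then 0 else lamN (m - 4) p (q - 2)) + (if q = 0 then 0 else lamN (m - 3) p (q - 1))"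
  using rec_general[of m p q] rest_2[OF assms, of p q] assms by simp

lemma shortm_small: "shortm m A \<Longrightarrow> m \<le> 1 \<Longrightarrow> A = {}"
  using shortm_arc by fastforce

lemma lamN_small: assumes "m \<le> 1" shows "lamN m p q = (if p = 0 \<and> q = 0 then 1 else 0)"
proof -
  have sh: "shortm m A \<longleftrightarrow> A = {}" for A
  proof
    assume "shortm m A" then show "A = {}" by (rule shortm_small[OF _ assms])
  next
    assume "A = {}" then show "shortm m A" by simp
  qed
  show ?thesis
  proof (cases "p = 0 \<and> q = 0")
    case True
    have "(shortm m A \<and> c1 A = p \<and> c2 A = q) \<longleftrightarrow> A \<in> {{}}" for A
      unfolding sh using True by auto
    then have e: "{A. shortm m A \<and> c1 A = p \<and> c2 A = q} = {{}}" by blast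
    show ?thesis unfolding lamN_def e using True by simp
  next
    case False
    have "\<not> (shortm m A \<and> c1 A = p \<and> c2 A = q)" for A
      unfolding sh using False by auto
    then have e: "{A. shortm m A \<and> c1 A = p \<and> c2 A = q} = {}" by blast
    show ?thesis unfolding lamN_def e using False by simp
  qed
qed

lemma lamN_q0: "lamN m p 0 = (m - p) choose p"
proof (induction m arbitrary: p rule: less_induct)
  case (less m)
  show ?case
  proof (cases "m \<le> 1")
    case True
    then show ?thesis using lamN_small[OF True, of p 0]
      by (cases p) (auto simp: Suc_diff_le)
  next
    case False
    then have m2: "m \<ge> 2" by simp
    have r: "lamN m p 0 = lamN (m - 1) p 0 + (if p = 0 then 0 else lamN (m - 2) (p - 1) 0)"
      using rec_general[OF m2, of p 0] rest_q0[of m p] by simp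
    show ?thesis
    proof (cases p)
      case 0
      then show ?thesis using r less.IH[of "m - 1" 0] m2 by simp
    next
      case (Suc k)
      have i1: "lamN (m - 1) p 0 = (m - 1 - p) choose p" using less.IH[of "m - 1" p] m2 by simp
      have i2: "lamN (m - 2) k 0 = (m - 2 - k) choose k" using less.IH[of "m - 2" k] m2 by simp
      have e: "lamN m p 0 = ((m - 1 - p) choose Suc k) + ((m - 2 - k) choose k)"
        using r i1 i2 Suc by simp
      show ?thesis
      proof (cases "p \<le> m - 1")
        case True
        then have "m - p = Suc (m - 1 - p)" "m - 2 - k = m - 1 - p" using Suc m2 by auto
        then show ?thesis using e Suc by simp
      next
        case False
        then have "m - p = 0" "m - 1 - p = 0" "m - 2 - k = 0" "k \<ge> 1" using Suc m2 by auto
        then show ?thesis using e Suc by simp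
      qed
    qed
  qed
qed

lemma lamN_too_big: assumes "m < 2 * (p + q)" shows "lamN m p q = 0"
proof -
  have e: "{A. shortm m A \<and> c1 A = p \<and> c2 A = q} = {}"
    using shortm_card_le card_c assms by fastforce
  show ?thesis unfolding lamN_def e by simp
qed

lemma lamN_01: assumes "m \<ge> 2" shows "lamN m 0 1 = m - 2"
proof -
  have "{A. shortm m A \<and> c1 A = 0 \<and> c2 A = 1} = (\<lambda>i. {(i, i + 2)}) ` {1..m - 2}"
  proof (intro equalityI subsetI)
    fix A assume "A \<in> {A. shortm m A \<and> c1 A = 0 \<and> c2 A = 1}"
    then have A: "shortm m A" "c1 A = 0" "c2 A = 1" by simp_all
    have "card A = 1" using card_c[OF A(1)] A by simp
    then obtain a where a: "A = {a}" by (meson card_1_singletonE)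
    have h: "1 \<le> fst a" "fst a < snd a" "snd a \<le> m" using shortm_arc[OF A(1)] a by auto
    have s: "snd a = fst a + 1 \<or> snd a = fst a + 2" using A(1) a unfolding shortm_def by auto
    have "snd a \<noteq> fst a + 1"
    proof
      assume "snd a = fst a + 1"
      then have "{(i, j)\<in>A. j = i + 1} = {a}" using a by auto
      then show False using A(2) unfolding c1_def by simp
    qed
    then have "snd a = fst a + 2" using s by simp
    then have "A = {(fst a, fst a + 2)}" "fst a \<in> {1..m - 2}" using a h by (metis prod.collapse) (use h \<open>snd a = fst a + 2\<close> in auto)
    then show "A \<in> (\<lambda>i. {(i, i + 2)}) ` {1..m - 2}" by blast
  next
    fix A assume "A \<in> (\<lambda>i. {(i, i + 2)}) ` {1..m - 2}"
    then obtain x where x: "A = {(x, x + 2)}" "1 \<le> x" "x \<le> m - 2" by auto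
    have "shortm m A" using x assms unfolding shortm_def digraph_on_def vertex_disjoint_def by auto
    moreover have e1: "{(i, j)\<in>A. j = i + 1} = {}" using x by auto
    moreover have e2: "{(i, j)\<in>A. j = i + 2} = A" using x by auto
    moreover have "c1 A = 0" unfolding c1_def e1 by simp
    moreover have "c2 A = 1" unfolding c2_def e2 using x by simp
    ultimately show "A \<in> {A. shortm m A \<and> c1 A = 0 \<and> c2 A = 1}" by simp
  qed
  moreover have "inj_on (\<lambda>i. {(i, i + 2::nat)}) {1..m - 2}" by (rule inj_onI) simp
  ultimately show ?thesis unfolding lamN_def by (simp add: card_image)
qed



lemma cross_mono:
  fixes ii jj :: "nat \<Rightarrow> nat"
  assumes mono: "\<forall>t. Suc t < k \<longrightarrow> ii t < ii (Suc t) \<and> jj t < jj (Suc t)"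
  shows "s < t \<Longrightarrow> t < k \<Longrightarrow> ii s < ii t \<and> jj s < jj t"
proof (induction t)
  case 0 then show ?case by simp
next
  case (Suc t)
  then have st: "Suc t < k" by simp
  have step: "ii t < ii (Suc t)" "jj t < jj (Suc t)" using mono st by auto
  show ?case
  proof (cases "s = t")
    case True then show ?thesis using step by simp
  next
    case False
    then have "s < t" using Suc.prems by simp
    then have "ii s < ii t \<and> jj s < jj t" using Suc.IH st by simp
    then show ?thesis using step by simp
  qed
qed

lemma cross_le:
  fixes ii jj :: "nat \<Rightarrow> nat"
  assumes mono: "\<forall>t. Suc t < k \<longrightarrow> ii t < ii (Suc t) \<and> jj t < jj (Suc t)"
  shows "s \<le> t \<Longrightarrow> t < k \<Longrightarrow> ii s \<le> ii t \<and> jj s \<le> jj t"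
  using cross_mono[OF mono, of s t] by (cases "s = t") auto

lemma long_arcs:
  fixes ii jj :: "nat \<Rightarrow> nat"
  assumes vd: "vertex_disjoint D" and k3: "3 \<le> k"
    and mem: "\<forall>t<k. (ii t, jj t) \<in> D"
    and mono: "\<forall>t. Suc t < k \<longrightarrow> ii t < ii (Suc t) \<and> jj t < jj (Suc t)"
    and cr: "ii (k - 1) < jj 0" and t: "t < k"
  shows "ii t + 2 < jj t"
proof (rule ccontr)
  assume neg: "\<not> ii t + 2 < jj t"
  have key: "ii s = ii t + 1 \<or> jj s = ii t + 1" if s: "s < k" "s \<noteq> t" for s
  proof (cases "s < t")
    case True
    have "ii t \<le> ii (k - 1)" using cross_le[OF mono, of t "k - 1"] t by simp
    moreover have "jj 0 \<le> jj s" using cross_le[OF mono, of 0 s] s by simp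
    moreover have "jj s < jj t" using cross_mono[OF mono True t] by simp
    ultimately have "ii t < jj s" "jj s < jj t" using cr by linarith+
    then show ?thesis using neg by linarith
  next
    case False
    then have ts: "t < s" using s by simp
    have "ii t < ii s" using cross_mono[OF mono ts s(1)] by simp
    moreover have "ii s \<le> ii (k - 1)" using cross_le[OF mono, of s "k - 1"] s by simp
    moreover have "jj 0 \<le> jj t" using cross_le[OF mono, of 0 t] t by simp
    ultimately have "ii t < ii s" "ii s < jj t" using cr by linarith+
    then show ?thesis using neg by linarith
  qed
  obtain s1 s2 where ss: "s1 < k" "s2 < k" "s1 \<noteq> t" "s2 \<noteq> t" "s1 < s2"
  proof (cases "t = 0")
    case True then show ?thesis using that[of 1 2] k3 by simp
  next
    case False
    show ?thesis
    proof (cases "t = 1")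
      case True then show ?thesis using that[of 0 2] k3 by simp
    next
      case False then show ?thesis using that[of 0 1] k3 \<open>t \<noteq> 0\<close> by simp
    qed
  qed
  have ne: "(ii s1, jj s1) \<noteq> (ii s2, jj s2)" using cross_mono[OF mono ss(5) ss(2)] by simp
  have m1: "(ii s1, jj s1) \<in> D" "(ii s2, jj s2) \<in> D" using mem ss by auto
  have "{fst (ii s1, jj s1), snd (ii s1, jj s1)} \<inter> {fst (ii s2, jj s2), snd (ii s2, jj s2)} = {}"
    using vd m1 ne unfolding vertex_disjoint_def by blast
  then have "{ii s1, jj s1} \<inter> {ii s2, jj s2} = {}" by simp
  moreover have "ii s1 = ii t + 1 \<or> jj s1 = ii t + 1" using key[of s1] ss by blast
  moreover have "ii s2 = ii t + 1 \<or> jj s2 = ii t + 1" using key[of s2] ss by blast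
  ultimately show False by auto
qed

lemma enum_exists:
  fixes W :: "nat set"
  assumes "finite W"
  shows "\<exists>g. (\<forall>a b. a \<in> {1..card W} \<longrightarrow> b \<in> {1..card W} \<longrightarrow> a < b \<longrightarrow> g a < g b) \<and> g ` {1..card W} = W"
proof -
  define xs where "xs = sorted_list_of_set W"
  have sw: "sorted_wrt (<) xs" unfolding xs_def by (rule strict_sorted_list_of_set)
  have len: "length xs = card W" unfolding xs_def by simp
  have st: "set xs = W" unfolding xs_def using assms by simp
  define g where "g a = xs ! (a - 1)" for a
  have "\<forall>a b. a \<in> {1..card W} \<longrightarrow> b \<in> {1..card W} \<longrightarrow> a < b \<longrightarrow> g a < g b"
  proof (intro allI impI)
    fix a b assume ab: "a \<in> {1..card W}" "b \<in> {1..card W}" "a < b"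
    then have "a - 1 < b - 1" "b - 1 < length xs" using len by auto
    then show "g a < g b" unfolding g_def using sorted_wrt_nth_less[OF sw] by blast
  qed
  moreover have "g ` {1..card W} = W"
  proof (intro equalityI subsetI)
    fix x assume "x \<in> g ` {1..card W}"
    then obtain a where a: "a \<in> {1..card W}" "x = g a" by blast
    then have "a - 1 < length xs" using len by auto
    then show "x \<in> W" using a st unfolding g_def by auto
  next
    fix x assume "x \<in> W"
    then obtain i where i: "i < length xs" "xs ! i = x" using st by (metis in_set_conv_nth)
    then have "Suc i \<in> {1..card W}" "g (Suc i) = x" using len unfolding g_def by auto
    then show "x \<in> g ` {1..card W}" by (metis image_eqI)
  qed
  ultimately show ?thesis by blast
qed



locale emb =
  fixes k n m :: nat and B :: "(nat \<times> nat) set" and g :: "nat \<Rightarrow> nat"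
  assumes k3: "3 \<le> k" and sB: "shortm n B"
    and gmono: "\<And>a b. a \<in> {1..m} \<Longrightarrow> b \<in> {1..m} \<Longrightarrow> a < b \<Longrightarrow> g a < g b"
    and gimg: "g ` {1..m} = {1..n} - verts B"
begin

definition G :: "(nat \<times> nat) set \<Rightarrow> (nat \<times> nat) set" where "G E = map_prod g g ` E"
definition Phi :: "(nat \<times> nat) set \<Rightarrow> (nat \<times> nat) set" where "Phi E = B \<union> G E"

lemma gless: "a \<in> {1..m} \<Longrightarrow> b \<in> {1..m} \<Longrightarrow> g a < g b \<longleftrightarrow> a < b"
  using gmono by (metis less_asym linorder_neqE_nat)
lemma geq: "a \<in> {1..m} \<Longrightarrow> b \<in> {1..m} \<Longrightarrow> g a = g b \<longleftrightarrow> a = b"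
  using gmono by (metis less_irrefl linorder_neqE_nat)
lemma ginj: "inj_on g {1..m}" by (rule inj_onI) (use geq in blast)
lemma gW: "a \<in> {1..m} \<Longrightarrow> g a \<in> {1..n}" "a \<in> {1..m} \<Longrightarrow> g a \<notin> verts B" using gimg by blast+
lemma Bv: "x \<in> B \<Longrightarrow> fst x \<in> verts B" "x \<in> B \<Longrightarrow> snd x \<in> verts B" unfolding verts_def by auto
lemma Bshort: "x \<in> B \<Longrightarrow> snd x \<le> fst x + 2" using sB unfolding shortm_def by auto
lemma dB: "digraph_on n B" and vB: "vertex_disjoint B" using sB unfolding shortm_def by auto
lemma Gmem: "x \<in> G E \<longleftrightarrow> (\<exists>a b. (a, b) \<in> E \<and> x = (g a, g b))"
  unfolding G_def by (cases x) auto

lemma Gv: assumes "E \<subseteq> {1..m} \<times> {1..m}" "z \<in> G E" shows "fst z \<notin> verts B" "snd z \<notin> verts B"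
proof -
  obtain a b where ab: "(a, b) \<in> E" "z = (g a, g b)" using Gmem assms(2) by blast
  then have "a \<in> {1..m}" "b \<in> {1..m}" using assms(1) by auto
  then show "fst z \<notin> verts B" "snd z \<notin> verts B" using ab gW by simp_all
qed

lemma disjB: assumes "E \<subseteq> {1..m} \<times> {1..m}" shows "B \<inter> G E = {}"
  using Gv[OF assms] Bv by blast

lemma digraph_Phi: assumes Eb: "E \<subseteq> {1..m} \<times> {1..m}" and dE: "digraph_on m E"
  shows "digraph_on n (Phi E)"
  unfolding digraph_on_def
proof
  fix x assume "x \<in> Phi E"
  then consider "x \<in> B" | "x \<in> G E" unfolding Phi_def by blast
  then show "x \<in> {(i, j). 1 \<le> i \<and> i < j \<and> j \<le> n}"
  proof cases
    case 1 then show ?thesis using dB unfolding digraph_on_def by blast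
  next
    case 2
    then obtain a b where ab: "(a, b) \<in> E" "x = (g a, g b)" using Gmem by blast
    have h: "a \<in> {1..m}" "b \<in> {1..m}" "a < b" using ab(1) dE unfolding digraph_on_def by auto
    have "g a < g b" using gmono[OF h] .
    moreover have "g a \<in> {1..n}" "g b \<in> {1..n}" using gW h by auto
    ultimately show ?thesis using ab(2) by auto
  qed
qed

lemma vd_Phi: assumes Eb: "E \<subseteq> {1..m} \<times> {1..m}" and vE: "vertex_disjoint E"
  shows "vertex_disjoint (Phi E)"
  unfolding vertex_disjoint_def
proof (intro ballI impI)
  fix x y assume x: "x \<in> Phi E" and y: "y \<in> Phi E" and xy: "x \<noteq> y"
  show "{fst x, snd x} \<inter> {fst y, snd y} = {}"
  proof (cases "x \<in> B")
    case xB: True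
    show ?thesis
    proof (cases "y \<in> B")
      case True then show ?thesis using xB xy vB unfolding vertex_disjoint_def by blast
    next
      case False then have "y \<in> G E" using y unfolding Phi_def by blast
      then show ?thesis using Gv[OF Eb, of y] Bv[OF xB] by auto
    qed
  next
    case xB: False
    then have xG: "x \<in> G E" using x unfolding Phi_def by blast
    show ?thesis
    proof (cases "y \<in> B")
      case True then show ?thesis using Gv[OF Eb xG] Bv[OF True] by auto
    next
      case False then have yG: "y \<in> G E" using y unfolding Phi_def by blast
      obtain a b where ab: "(a, b) \<in> E" "x = (g a, g b)" using Gmem xG by blast
      obtain c d where cd: "(c, d) \<in> E" "y = (g c, g d)" using Gmem yG by blast
      have "(a, b) \<noteq> (c, d)" using ab cd xy by auto
      then have "{fst (a, b), snd (a, b)} \<inter> {fst (c, d), snd (c, d)} = {}"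
        using vE ab(1) cd(1) unfolding vertex_disjoint_def by blast
      then have "{a, b} \<inter> {c, d} = {}" by simp
      moreover have "a \<in> {1..m}" "b \<in> {1..m}" "c \<in> {1..m}" "d \<in> {1..m}" using ab cd Eb by auto
      ultimately show ?thesis using ab(2) cd(2) geq by auto
    qed
  qed
qed


lemma nocross_Phi: assumes Eb: "E \<subseteq> {1..m} \<times> {1..m}" and vP: "vertex_disjoint (Phi E)"
  and xE: "\<not> has_k_crossing k E"
  shows "\<not> has_k_crossing k (Phi E)"
proof
  assume "has_k_crossing k (Phi E)"
  then obtain ii jj :: "nat \<Rightarrow> nat" where mem: "\<forall>t<k. (ii t, jj t) \<in> Phi E"
    and mono: "\<forall>t. Suc t < k \<longrightarrow> ii t < ii (Suc t) \<and> jj t < jj (Suc t)"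
    and cr: "ii (k - 1) < jj 0"
    unfolding has_k_crossing_def by blast
  have ex: "\<exists>p. t < k \<longrightarrow> p \<in> E \<and> ii t = g (fst p) \<and> jj t = g (snd p)" for t
  proof (cases "t < k")
    case True
    have "ii t + 2 < jj t" by (rule long_arcs[OF vP k3 mem mono cr True])
    then have "(ii t, jj t) \<notin> B" using Bshort[of "(ii t, jj t)"] by auto
    then have "(ii t, jj t) \<in> G E" using mem True unfolding Phi_def by blast
    then obtain a b where "(a, b) \<in> E" "(ii t, jj t) = (g a, g b)" using Gmem by blast
    then show ?thesis by (intro exI[of _ "(a, b)"]) auto
  qed simp
  have ex': "\<forall>t. \<exists>p. t < k \<longrightarrow> p \<in> E \<and> ii t = g (fst p) \<and> jj t = g (snd p)" using ex by blast
  obtain h0 where h0: "\<forall>t. t < k \<longrightarrow> h0 t \<in> E \<and> ii t = g (fst (h0 t)) \<and> jj t = g (snd (h0 t))"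
    using choice[OF ex'] by blast
  define h where "h = h0"
  have h: "\<And>t. t < k \<Longrightarrow> h t \<in> E \<and> ii t = g (fst (h t)) \<and> jj t = g (snd (h t))"
    using h0 unfolding h_def by blast
  have hb: "fst (h t) \<in> {1..m}" "snd (h t) \<in> {1..m}" if "t < k" for t
  proof -
    have "h t \<in> {1..m} \<times> {1..m}" using h[OF that] Eb by blast
    then show "fst (h t) \<in> {1..m}" "snd (h t) \<in> {1..m}" by auto
  qed
  have k0: "k - 1 < k" "0 < k" using k3 by auto
  have m': "\<forall>t<k. (fst (h t), snd (h t)) \<in> E" using h by simp
  have mo': "\<forall>t. Suc t < k \<longrightarrow> fst (h t) < fst (h (Suc t)) \<and> snd (h t) < snd (h (Suc t))"
  proof (intro allI impI)
    fix t assume t: "Suc t < k"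
    then have t': "t < k" by simp
    have "ii t < ii (Suc t)" "jj t < jj (Suc t)" using mono t by auto
    then have "g (fst (h t)) < g (fst (h (Suc t)))" "g (snd (h t)) < g (snd (h (Suc t)))"
      using h[OF t] h[OF t'] by auto
    then show "fst (h t) < fst (h (Suc t)) \<and> snd (h t) < snd (h (Suc t))"
      using gless hb[OF t] hb[OF t'] by auto
  qed
  have "g (fst (h (k - 1))) < g (snd (h 0))" using cr h[OF k0(1)] h[OF k0(2)] by simp
  then have c': "fst (h (k - 1)) < snd (h 0)" using gless hb[OF k0(1)] hb[OF k0(2)] by auto
  have "has_k_crossing k E" unfolding has_k_crossing_def
    by (intro exI[of _ "\<lambda>t. fst (h t)"] exI[of _ "\<lambda>t. snd (h t)"]) (use m' mo' c' in simp)
  then show False using xE by simp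
qed

lemma fwd1: assumes Eb: "E \<subseteq> {1..m} \<times> {1..m}" and nc: "k_noncrossing k m E"
  shows "k_noncrossing k n (Phi E)"
proof -
  have dE: "digraph_on m E" and vE: "vertex_disjoint E" and xE: "\<not> has_k_crossing k E"
    using nc unfolding k_noncrossing_def by auto
  have vP: "vertex_disjoint (Phi E)" by (rule vd_Phi[OF Eb vE])
  show ?thesis unfolding k_noncrossing_def using digraph_Phi[OF Eb dE] vP nocross_Phi[OF Eb vP xE] by simp
qed

lemma fwd2: assumes Eb: "E \<subseteq> {1..m} \<times> {1..m}" and nc: "k_noncrossing k n (Phi E)"
  shows "k_noncrossing k m E"
proof -
  have dP: "digraph_on n (Phi E)" and vP: "vertex_disjoint (Phi E)" and xP: "\<not> has_k_crossing k (Phi E)"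
    using nc unfolding k_noncrossing_def by auto
  have inP: "(g a, g b) \<in> Phi E" if "(a, b) \<in> E" for a b
    using that unfolding Phi_def G_def by force
  have dE: "digraph_on m E" unfolding digraph_on_def
  proof
    fix x assume x: "x \<in> E"
    obtain a b where ab: "x = (a, b)" by (cases x)
    have h: "a \<in> {1..m}" "b \<in> {1..m}" using x ab Eb by auto
    have "g a < g b" using inP[of a b] x ab dP unfolding digraph_on_def by auto
    then have "a < b" using gless h by auto
    then show "x \<in> {(i, j). 1 \<le> i \<and> i < j \<and> j \<le> m}" using h ab by auto
  qed
  have vE: "vertex_disjoint E" unfolding vertex_disjoint_def
  proof (intro ballI impI)
    fix x y assume x: "x \<in> E" and y: "y \<in> E" and xy: "x \<noteq> y"
    obtain a b where ab: "x = (a, b)" by (cases x)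
    obtain c d where cd: "y = (c, d)" by (cases y)
    have h: "a \<in> {1..m}" "b \<in> {1..m}" "c \<in> {1..m}" "d \<in> {1..m}" using x y ab cd Eb by auto
    have "(g a, g b) \<noteq> (g c, g d)" using xy ab cd geq h by auto
    then have "{fst (g a, g b), snd (g a, g b)} \<inter> {fst (g c, g d), snd (g c, g d)} = {}"
      using vP inP[of a b] inP[of c d] x y ab cd unfolding vertex_disjoint_def by blast
    then have "{g a, g b} \<inter> {g c, g d} = {}" by simp
    then have "{a, b} \<inter> {c, d} = {}" by auto
    then show "{fst x, snd x} \<inter> {fst y, snd y} = {}" using ab cd by simp
  qed
  have xE: "\<not> has_k_crossing k E"
  proof
    assume "has_k_crossing k E"
    then obtain ii jj :: "nat \<Rightarrow> nat" where mem: "\<forall>t<k. (ii t, jj t) \<in> E"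
      and mono: "\<forall>t. Suc t < k \<longrightarrow> ii t < ii (Suc t) \<and> jj t < jj (Suc t)"
      and cr: "ii (k - 1) < jj 0"
      unfolding has_k_crossing_def by blast
    have hb: "ii t \<in> {1..m}" "jj t \<in> {1..m}" if "t < k" for t
      using mem that Eb by blast+
    have k0: "k - 1 < k" "0 < k" using k3 by auto
    have m': "\<forall>t<k. (g (ii t), g (jj t)) \<in> Phi E" using inP mem by blast
    have mo': "\<forall>t. Suc t < k \<longrightarrow> g (ii t) < g (ii (Suc t)) \<and> g (jj t) < g (jj (Suc t))"
    proof (intro allI impI)
      fix t assume t: "Suc t < k"
      then have t': "t < k" by simp
      show "g (ii t) < g (ii (Suc t)) \<and> g (jj t) < g (jj (Suc t))"
        using mono t gmono hb[OF t] hb[OF t'] by auto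
    qed
    have c': "g (ii (k - 1)) < g (jj 0)" using cr gmono hb[OF k0(1)] hb[OF k0(2)] by auto
    have "has_k_crossing k (Phi E)" unfolding has_k_crossing_def
      by (intro exI[of _ "\<lambda>t. g (ii t)"] exI[of _ "\<lambda>t. g (jj t)"]) (use m' mo' c' in simp)
    then show False using xP by simp
  qed
  show ?thesis unfolding k_noncrossing_def using dE vE xE by simp
qed

lemma iso_Phi: assumes Eb: "E \<subseteq> {1..m} \<times> {1..m}"
  shows "isolated n (Phi E) = g ` isolated m E"
proof (intro equalityI subsetI)
  fix v assume v: "v \<in> isolated n (Phi E)"
  then have v1: "v \<in> {1..n}" and v2: "\<And>i j. (i, j) \<in> Phi E \<Longrightarrow> v \<noteq> i \<and> v \<noteq> j"
    unfolding isolated_def by auto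
  have "v \<notin> verts B"
  proof
    assume "v \<in> verts B"
    then obtain x where x: "x \<in> B" "v = fst x \<or> v = snd x" unfolding verts_def by auto
    have "x \<in> Phi E" using x unfolding Phi_def by blast
    then show False using v2[of "fst x" "snd x"] x by auto
  qed
  then have "v \<in> g ` {1..m}" using gimg v1 by blast
  then obtain a where a: "a \<in> {1..m}" "v = g a" by blast
  have "a \<in> isolated m E" unfolding isolated_def
  proof (intro CollectI conjI ballI)
    show "a \<in> {1..m}" by fact
    fix x assume x: "x \<in> E"
    obtain c d where cd: "x = (c, d)" by (cases x)
    have "(g c, g d) \<in> Phi E" using x cd unfolding Phi_def G_def by force
    then have "g a \<noteq> g c \<and> g a \<noteq> g d" using v2 a by blast
    then show "case x of (i, j) \<Rightarrow> a \<noteq> i \<and> a \<noteq> j" using cd by auto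
  qed
  then show "v \<in> g ` isolated m E" using a by blast
next
  fix v assume "v \<in> g ` isolated m E"
  then obtain a where a: "a \<in> isolated m E" "v = g a" by blast
  then have a1: "a \<in> {1..m}" and a2: "\<And>c d. (c, d) \<in> E \<Longrightarrow> a \<noteq> c \<and> a \<noteq> d"
    unfolding isolated_def by auto
  show "v \<in> isolated n (Phi E)" unfolding isolated_def
  proof (intro CollectI conjI ballI)
    show "v \<in> {1..n}" using gW a1 a by simp
    fix x assume x: "x \<in> Phi E"
    obtain i j where ij: "x = (i, j)" by (cases x)
    show "case x of (i, j) \<Rightarrow> v \<noteq> i \<and> v \<noteq> j"
    proof (cases "x \<in> B")
      case True
      then have "i \<in> verts B" "j \<in> verts B" using Bv ij by force+
      then show ?thesis using gW(2)[OF a1] a ij by auto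
    next
      case False
      then have "x \<in> G E" using x unfolding Phi_def by blast
      then obtain c d where cd: "(c, d) \<in> E" "x = (g c, g d)" using Gmem by blast
      have "c \<in> {1..m}" "d \<in> {1..m}" using cd Eb by auto
      then have "g a \<noteq> g c" "g a \<noteq> g d" using a2[OF cd(1)] geq a1 by auto
      then show ?thesis using cd a by auto
    qed
  qed
qed

lemma iso_card: assumes Eb: "E \<subseteq> {1..m} \<times> {1..m}"
  shows "card (isolated n (Phi E)) = card (isolated m E)"
proof -
  have "isolated m E \<subseteq> {1..m}" unfolding isolated_def by auto
  then have "inj_on g (isolated m E)" using inj_on_subset[OF ginj] by blast
  then show ?thesis unfolding iso_Phi[OF Eb] by (rule card_image)
qed


lemma count_contain:
  "card {D. k_noncrossing k n D \<and> B \<subseteq> D \<and> card (isolated n D) = l} = f_nc k m l"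
proof -
  let ?P = "{E. k_noncrossing k m E \<and> card (isolated m E) = l}"
  let ?Q = "{D. k_noncrossing k n D \<and> B \<subseteq> D \<and> card (isolated n D) = l}"
  have Pb: "E \<subseteq> {1..m} \<times> {1..m}" if "k_noncrossing k m E" for E
    using that digraph_sub unfolding k_noncrossing_def by blast
  have "bij_betw Phi ?P ?Q"
  proof (rule bij_betwI')
    fix x y assume x: "x \<in> ?P" and y: "y \<in> ?P"
    have xb: "x \<subseteq> {1..m} \<times> {1..m}" and yb: "y \<subseteq> {1..m} \<times> {1..m}" using x y Pb by auto
    show "(Phi x = Phi y) = (x = y)"
    proof
      assume e: "Phi x = Phi y"
      have "G x = Phi x - B" "G y = Phi y - B" using disjB[OF xb] disjB[OF yb] unfolding Phi_def by auto
      then have "G x = G y" using e by simp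
      then have "map_prod g g ` x = map_prod g g ` y" unfolding G_def .
      then show "x = y" using inj_on_image_eq_iff[OF map_prod_inj_on[OF ginj ginj] xb yb] by simp
    qed simp
  next
    fix x assume x: "x \<in> ?P"
    have xb: "x \<subseteq> {1..m} \<times> {1..m}" using x Pb by auto
    show "Phi x \<in> ?Q" using fwd1[OF xb] iso_card[OF xb] x unfolding Phi_def by auto
  next
    fix D assume D: "D \<in> ?Q"
    then have nD: "k_noncrossing k n D" and BD: "B \<subseteq> D" and lD: "card (isolated n D) = l" by auto
    have dD: "digraph_on n D" and vD: "vertex_disjoint D" using nD unfolding k_noncrossing_def by auto
    define E where "E = {p \<in> {1..m} \<times> {1..m}. (g (fst p), g (snd p)) \<in> D}"
    have Eb: "E \<subseteq> {1..m} \<times> {1..m}" unfolding E_def by blast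
    have PE: "Phi E = D"
    proof (intro equalityI subsetI)
      fix x assume "x \<in> Phi E"
      then consider "x \<in> B" | "x \<in> G E" unfolding Phi_def by blast
      then show "x \<in> D"
      proof cases
        case 1 then show ?thesis using BD by blast
      next
        case 2
        then obtain a b where "(a, b) \<in> E" "x = (g a, g b)" using Gmem by blast
        then show ?thesis unfolding E_def by auto
      qed
    next
      fix x assume xD: "x \<in> D"
      show "x \<in> Phi E"
      proof (cases "x \<in> B")
        case True then show ?thesis unfolding Phi_def by blast
      next
        case False
        have nv: "v \<notin> verts B" if "v = fst x \<or> v = snd x" for v
        proof
          assume "v \<in> verts B"
          then obtain y where y: "y \<in> B" "v = fst y \<or> v = snd y" unfolding verts_def by auto
          have "y \<in> D" "y \<noteq> x" using y BD False by auto
          then have "{fst x, snd x} \<inter> {fst y, snd y} = {}" using vD xD unfolding vertex_disjoint_def by blast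
          then show False using y that by auto
        qed
        have "fst x \<in> {1..n}" "snd x \<in> {1..n}" using dD xD unfolding digraph_on_def by auto
        then have "fst x \<in> g ` {1..m}" "snd x \<in> g ` {1..m}" using nv gimg by auto
        then obtain a b where ab: "a \<in> {1..m}" "fst x = g a" "b \<in> {1..m}" "snd x = g b" by blast
        then have "x = (g a, g b)" by (metis prod.collapse)
        then have "(a, b) \<in> E" using ab xD unfolding E_def by auto
        then have "x \<in> G E" using Gmem \<open>x = (g a, g b)\<close> by blast
        then show ?thesis unfolding Phi_def by blast
      qed
    qed
    have "k_noncrossing k m E" using fwd2[OF Eb] nD PE by simp
    moreover have "card (isolated m E) = l" using iso_card[OF Eb] PE lD by simp
    ultimately show "\<exists>x\<in>?P. D = Phi x" using PE by auto
  qed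
  then have "card ?P = card ?Q" by (rule bij_betw_same_card)
  then show ?thesis unfolding f_nc_def by simp
qed

end



lemma count_B:
  assumes k3: "3 \<le> k" and sB: "shortm n B"
  shows "card {D. k_noncrossing k n D \<and> B \<subseteq> D \<and> card (isolated n D) = l} = f_nc k (n - 2 * card B) l"
proof -
  define W where "W = {1..n} - verts B"
  have fW: "finite W" unfolding W_def by simp
  have fB: "finite B" using sB digraph_finite shortm_def by blast
  have cv: "card (verts B) = 2 * card B"
    by (rule card_verts) (use sB fB in \<open>auto simp: shortm_def digraph_on_def\<close>)
  have vs: "verts B \<subseteq> {1..n}" using verts_sub sB unfolding shortm_def by blast
  have cW: "card W = n - 2 * card B" unfolding W_def using card_Diff_subset[OF finite_subset[OF vs] vs] cv by simp
  obtain g where g: "\<forall>a b. a \<in> {1..card W} \<longrightarrow> b \<in> {1..card W} \<longrightarrow> a < b \<longrightarrow> g a < g b" "g ` {1..card W} = W"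
    using enum_exists[OF fW] by blast
  interpret emb k n "card W" B g
    by unfold_locales (use k3 sB g in \<open>auto simp: W_def\<close>)
  show ?thesis using count_contain[of l] cW by simp
qed

lemma alt_sum:
  assumes "finite S"
  shows "(\<Sum>X\<in>Pow S. (-1::int) ^ card X) = (if S = {} then 1 else 0)"
proof -
  have "(\<Prod>x\<in>S. (1::int) - 1) = (\<Sum>X\<in>Pow S. (-1) ^ card X * (\<Prod>x\<in>X. 1) * (\<Prod>x\<in>S - X. 1))"
    by (rule prod_diff_conv_sum[OF assms])
  then have "(\<Sum>X\<in>Pow S. (-1::int) ^ card X) = (\<Prod>x\<in>S. (1::int) - 1)" by simp
  also have "\<dots> = (if S = {} then 1 else 0)" using assms by (simp add: card_gt_0_iff)
  finally show ?thesis .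
qed

lemma finite_Dl: "finite {D. k_noncrossing k n D \<and> P D}"
  by (rule finite_subset[OF _ finite_digraphs[of n]]) (auto simp: k_noncrossing_def)

lemma part1:
  assumes k3: "3 \<le> k"
  shows "int (S_r k n l) =
            (\<Sum>(b1, b2)\<in>{(b1, b2). 2 * (b1 + b2) \<le> n}.
               (-1) ^ (b1 + b2) * int (lam n (int b1) (int b2)) *
               int (f_nc k (n - 2 * (b1 + b2)) l))"
proof -
  define Dl where "Dl = {D. k_noncrossing k n D \<and> card (isolated n D) = l}"
  define sh where "sh D = {a\<in>D. snd a = fst a + 1 \<or> snd a = fst a + 2}" for D :: "(nat \<times> nat) set"
  define M where "M = {X. shortm n X}"
  define I where "I = {(b1, b2). 2 * (b1 + b2) \<le> n}"
  have fDl: "finite Dl" unfolding Dl_def by (rule finite_Dl)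
  have fM: "finite M" unfolding M_def using finite_S[of n "\<lambda>_. True"] by simp
  have fI: "finite I" by (rule finite_subset[of _ "{0..n} \<times> {0..n}"]) (auto simp: I_def)
  have fD: "finite D" if "D \<in> Dl" for D using that digraph_finite unfolding Dl_def k_noncrossing_def by blast
  have e1: "{A. restricted_rna k n A \<and> card (isolated n A) = l} = {D\<in>Dl. sh D = {}}"
    unfolding Dl_def sh_def restricted_rna_def by fastforce
  have "int (S_r k n l) = int (card {D\<in>Dl. sh D = {}})" unfolding S_r_def e1 ..
  also have "\<dots> = (\<Sum>D\<in>{D\<in>Dl. sh D = {}}. 1)" by simp
  also have "\<dots> = (\<Sum>D\<in>Dl. if sh D = {} then 1 else 0)" by (rule sum.inter_filter[OF fDl])
  also have "\<dots> = (\<Sum>D\<in>Dl. \<Sum>X\<in>Pow (sh D). (-1::int) ^ card X)"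
  proof (rule sum.cong[OF refl])
    fix D assume "D \<in> Dl"
    then have "finite (sh D)" using fD unfolding sh_def by auto
    then show "(if sh D = {} then 1 else 0) = (\<Sum>X\<in>Pow (sh D). (-1::int) ^ card X)" using alt_sum[of "sh D"] by simp
  qed
  also have "\<dots> = (\<Sum>D\<in>Dl. \<Sum>X\<in>{X\<in>M. X \<subseteq> D}. (-1::int) ^ card X)"
  proof (rule sum.cong[OF refl])
    fix D assume D: "D \<in> Dl"
    then have dD: "digraph_on n D" and vD: "vertex_disjoint D" unfolding Dl_def k_noncrossing_def by auto
    have "Pow (sh D) = {X\<in>M. X \<subseteq> D}"
    proof (intro equalityI subsetI)
      fix X assume "X \<in> Pow (sh D)"
      then have X: "X \<subseteq> sh D" by simp
      have "shortm n X" unfolding shortm_def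
      proof (intro conjI)
        show "digraph_on n X" using dD X unfolding digraph_on_def sh_def by blast
        show "vertex_disjoint X" using vD X unfolding vertex_disjoint_def sh_def by blast
        show "\<forall>(i, j)\<in>X. j = i + 1 \<or> j = i + 2" using X unfolding sh_def by auto
      qed
      then show "X \<in> {X\<in>M. X \<subseteq> D}" using X unfolding M_def sh_def by auto
    next
      fix X assume "X \<in> {X\<in>M. X \<subseteq> D}"
      then have "shortm n X" "X \<subseteq> D" unfolding M_def by auto
      then show "X \<in> Pow (sh D)" unfolding sh_def shortm_def by auto
    qed
    then show "(\<Sum>X\<in>Pow (sh D). (-1::int) ^ card X) = (\<Sum>X\<in>{X\<in>M. X \<subseteq> D}. (-1::int) ^ card X)" by simp
  qed
  also have "\<dots> = (\<Sum>X\<in>M. \<Sum>D\<in>{D\<in>Dl. X \<subseteq> D}. (-1::int) ^ card X)"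
    by (rule sum.swap_restrict[OF fDl fM])
  also have "\<dots> = (\<Sum>X\<in>M. (-1::int) ^ card X * int (f_nc k (n - 2 * card X) l))"
  proof (rule sum.cong[OF refl])
    fix X assume X: "X \<in> M"
    have "{D\<in>Dl. X \<subseteq> D} = {D. k_noncrossing k n D \<and> X \<subseteq> D \<and> card (isolated n D) = l}"
      unfolding Dl_def by auto
    then have "card {D\<in>Dl. X \<subseteq> D} = f_nc k (n - 2 * card X) l"
      using count_B[OF k3, of n X l] X unfolding M_def by simp
    then show "(\<Sum>D\<in>{D\<in>Dl. X \<subseteq> D}. (-1::int) ^ card X) = (-1::int) ^ card X * int (f_nc k (n - 2 * card X) l)"
      by simp
  qed
  also have "\<dots> = (\<Sum>y\<in>I. \<Sum>X\<in>{X\<in>M. (c1 X, c2 X) = y}. (-1::int) ^ card X * int (f_nc k (n - 2 * card X) l))"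
  proof (rule sum.group[symmetric, OF fM fI])
    show "(\<lambda>X. (c1 X, c2 X)) ` M \<subseteq> I"
      using shortm_card_le card_c unfolding M_def I_def by fastforce
  qed
  also have "\<dots> = (\<Sum>(b1, b2)\<in>I. (-1) ^ (b1 + b2) * int (lam n (int b1) (int b2)) * int (f_nc k (n - 2 * (b1 + b2)) l))"
  proof (rule sum.cong[OF refl])
    fix y assume "y \<in> I"
    obtain b1 b2 where y: "y = (b1, b2)" by (cases y)
    have "(\<Sum>X\<in>{X\<in>M. (c1 X, c2 X) = y}. (-1::int) ^ card X * int (f_nc k (n - 2 * card X) l))
        = (\<Sum>X\<in>{X\<in>M. (c1 X, c2 X) = y}. (-1::int) ^ (b1 + b2) * int (f_nc k (n - 2 * (b1 + b2)) l))"
    proof (rule sum.cong[OF refl])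
      fix X assume "X \<in> {X\<in>M. (c1 X, c2 X) = y}"
      then have "card X = b1 + b2" using card_c y unfolding M_def by auto
      then show "(-1::int) ^ card X * int (f_nc k (n - 2 * card X) l) = (-1::int) ^ (b1 + b2) * int (f_nc k (n - 2 * (b1 + b2)) l)"
        by simp
    qed
    also have "\<dots> = int (card {X\<in>M. (c1 X, c2 X) = y}) * ((-1::int) ^ (b1 + b2) * int (f_nc k (n - 2 * (b1 + b2)) l))"
      by simp
    also have "card {X\<in>M. (c1 X, c2 X) = y} = lam n (int b1) (int b2)"
      unfolding lam_nat lamN_def M_def y by simp
    finally show "(\<Sum>X\<in>{X\<in>M. (c1 X, c2 X) = y}. (-1::int) ^ card X * int (f_nc k (n - 2 * card X) l))
        = (case y of (b1, b2) \<Rightarrow> (-1) ^ (b1 + b2) * int (lam n (int b1) (int b2)) * int (f_nc k (n - 2 * (b1 + b2)) l))"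
      using y by simp
  qed
  finally show ?thesis unfolding I_def .
qed


lemma iso_le: "card (isolated m A) \<le> m"
proof -
  have "isolated m A \<subseteq> {1..m}" unfolding isolated_def by auto
  then show ?thesis using card_mono[of "{1..m}"] by fastforce
qed

lemma f_nc_big: "l > m \<Longrightarrow> f_nc k m l = 0"
proof -
  assume l: "l > m"
  have e: "{A. k_noncrossing k m A \<and> card (isolated m A) = l} = {}" using iso_le[of m] l
    by (metis (mono_tags, lifting) empty_Collect_eq leD)
  show ?thesis unfolding f_nc_def e by simp
qed

lemma S_total_sum: "int (S_r_total k n) = (\<Sum>l = 0..n. int (S_r k n l))"
proof -
  let ?R = "{A. restricted_rna k n A}"
  have fR: "finite ?R" using finite_Dl[of k n "\<lambda>A. \<forall>(i, j)\<in>A. j \<noteq> i + 1 \<and> j \<noteq> i + 2"]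
    unfolding restricted_rna_def by simp
  have "(\<Sum>l\<in>{0..n}. \<Sum>A\<in>{A\<in>?R. card (isolated n A) = l}. (1::int)) = (\<Sum>A\<in>?R. 1)"
    by (rule sum.group[OF fR]) (use iso_le in auto)
  moreover have "{A\<in>?R. card (isolated n A) = l} = {A. restricted_rna k n A \<and> card (isolated n A) = l}" for l
    by auto
  ultimately show ?thesis unfolding S_r_total_def S_r_def by simp
qed

lemma part2:
  assumes k3: "3 \<le> k"
  shows "int (S_r_total k n) =
            (\<Sum>(b1, b2)\<in>{(b1, b2). 2 * (b1 + b2) \<le> n}.
               (-1) ^ (b1 + b2) * int (lam n (int b1) (int b2)) *
               (\<Sum>l = 0..n - 2 * (b1 + b2). int (f_nc k (n - 2 * (b1 + b2)) l)))"
proof -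
  define I where "I = {(b1, b2). 2 * (b1 + b2) \<le> (n::nat)}"
  have fI: "finite I" by (rule finite_subset[of _ "{0..n} \<times> {0..n}"]) (auto simp: I_def)
  have "int (S_r_total k n) = (\<Sum>l = 0..n. \<Sum>(b1, b2)\<in>I.
      (-1) ^ (b1 + b2) * int (lam n (int b1) (int b2)) * int (f_nc k (n - 2 * (b1 + b2)) l))"
    unfolding S_total_sum I_def using part1[OF k3] by simp
  also have "\<dots> = (\<Sum>(b1, b2)\<in>I. \<Sum>l = 0..n.
      (-1) ^ (b1 + b2) * int (lam n (int b1) (int b2)) * int (f_nc k (n - 2 * (b1 + b2)) l))"
    by (subst sum.swap) (simp add: case_prod_unfold)
  also have "\<dots> = (\<Sum>(b1, b2)\<in>I. (-1) ^ (b1 + b2) * int (lam n (int b1) (int b2)) *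
               (\<Sum>l = 0..n - 2 * (b1 + b2). int (f_nc k (n - 2 * (b1 + b2)) l)))"
  proof (rule sum.cong[OF refl])
    fix y assume "y \<in> I"
    obtain b1 b2 where y: "y = (b1, b2)" by (cases y)
    let ?m = "n - 2 * (b1 + b2)"
    have "(\<Sum>l = 0..n. int (f_nc k ?m l)) = (\<Sum>l = 0..?m. int (f_nc k ?m l))"
    proof (rule sum.mono_neutral_right)
      show "finite {0..n}" by simp
      show "{0..?m} \<subseteq> {0..n}" by auto
      show "\<forall>i\<in>{0..n} - {0..?m}. int (f_nc k ?m i) = 0" using f_nc_big by auto
    qed
    moreover have "(\<Sum>l = 0..n. ((-1) ^ (b1 + b2) * int (lam n (int b1) (int b2))) * int (f_nc k ?m l))
       = ((-1) ^ (b1 + b2) * int (lam n (int b1) (int b2))) * (\<Sum>l = 0..n. int (f_nc k ?m l))"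
      by (rule sum_distrib_left[symmetric])
    ultimately show "(case y of (b1, b2) \<Rightarrow> \<Sum>l = 0..n. (-1) ^ (b1 + b2) * int (lam n (int b1) (int b2)) * int (f_nc k (n - 2 * (b1 + b2)) l))
      = (case y of (b1, b2) \<Rightarrow> (-1) ^ (b1 + b2) * int (lam n (int b1) (int b2)) * (\<Sum>l = 0..n - 2 * (b1 + b2). int (f_nc k (n - 2 * (b1 + b2)) l)))"
      using y by (simp only: prod.case)
  qed
  finally show ?thesis unfolding I_def .
qed

lemma lam_shift1: "lam m (int p - 1) b = (if p = 0 then 0 else lam m (int (p - 1)) b)"
  by (cases p) (auto simp: lam_def)

lemma lam_shift1': "lam m b (int q - 1) = (if q = 0 then 0 else lam m b (int (q - 1)))"
  by (cases q) (auto simp: lam_def)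

lemma lam_shift2: "lam m b (int q - 2) = (if q < 2 then 0 else lam m b (int (q - 2)))"
proof (cases "q < 2")
  case True then show ?thesis by (simp add: lam_def)
next
  case False then have "int q - 2 = int (q - 2)" by simp
  then show ?thesis using False by simp
qed

lemma part3: assumes "m \<ge> 4" "b1 \<ge> 0" "b2 \<ge> 0"
  shows "lam m b1 b2 = lam (m - 2) (b1 - 1) b2 + lam (m - 1) b1 b2
                          + lam (m - 4) b1 (b2 - 2) + lam (m - 3) b1 (b2 - 1)"
proof -
  obtain p q where pq: "b1 = int p" "b2 = int q" using assms(2,3) nonneg_int_cases by metis
  show ?thesis unfolding pq lam_shift1 lam_shift1' lam_shift2 lam_nat
    using lamN_rec[OF assms(1), of p q] by simp
qed

theorem theorem4p1:
  fixes k n :: nat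
  assumes "k > 2" and "n \<ge> 1"
  shows "(\<forall>l. int (S_r k n l) =
            (\<Sum>(b1, b2)\<in>{(b1, b2). 2 * (b1 + b2) \<le> n}.
               (-1) ^ (b1 + b2) * int (lam n (int b1) (int b2)) *
               int (f_nc k (n - 2 * (b1 + b2)) l)))
       \<and> int (S_r_total k n) =
            (\<Sum>(b1, b2)\<in>{(b1, b2). 2 * (b1 + b2) \<le> n}.
               (-1) ^ (b1 + b2) * int (lam n (int b1) (int b2)) *
               (\<Sum>l = 0..n - 2 * (b1 + b2). int (f_nc k (n - 2 * (b1 + b2)) l)))
       \<and> (\<forall>m b1 b2. m \<ge> 4 \<longrightarrow> b1 \<ge> 0 \<longrightarrow> b2 \<ge> 0 \<longrightarrow>
            lam m b1 b2 = lam (m - 2) (b1 - 1) b2 + lam (m - 1) b1 b2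
                          + lam (m - 4) b1 (b2 - 2) + lam (m - 3) b1 (b2 - 1))
       \<and> (\<forall>m. lam m 0 0 = 1)
       \<and> (\<forall>m b1. lam m (int b1) 0 = (m - b1) choose b1)
       \<and> lam 1 0 1 = 0
       \<and> (\<forall>m. m \<ge> 2 \<longrightarrow> lam m 0 1 = m - 2)
       \<and> lam 2 0 2 = 0 \<and> lam 3 0 2 = 0"
proof -
  have k3: "3 \<le> k" using assms(1) by simp
  have l00: "lam m 0 0 = 1" for m using lam_nat[of m 0 0] lamN_q0[of m 0] by simp
  have lq0: "lam m (int b1) 0 = (m - b1) choose b1" for m b1 using lam_nat[of m b1 0] lamN_q0[of m b1] by simp
  have l101: "lam 1 0 1 = 0" using lam_nat[of 1 0 1] lamN_too_big[of 1 0 1] by simp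
  have l01: "lam m 0 1 = m - 2" if "m \<ge> 2" for m using lam_nat[of m 0 1] lamN_01[OF that] by simp
  have l202: "lam 2 0 2 = 0" using lam_nat[of 2 0 2] lamN_too_big[of 2 0 2] by simp
  have l302: "lam 3 0 2 = 0" using lam_nat[of 3 0 2] lamN_too_big[of 3 0 2] by simp
  show ?thesis using part1[OF k3] part2[OF k3] part3 l00 lq0 l101 l01 l202 l302 by blast
qed


end
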